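(* Let $G$ be a graph that violates the matching condition, i.e., there is a matching $M$ in $G$ such that the subgraph of $G$ induced by the vertices covered by $M$ has no independent set of size $|M|$. Let $uv$ be any edge of $G$, and let $G'$ be obtained from $G$ by deleting $uv$, adding two new vertices $x_1,x_2$, and adding the edges $ux_1,x_1x_2,x_2v$. Then $G'$ also violates the matching condition, i.e., there is a matching $M'$ in $G'$ such that the subgraph of $G'$ induced by the vertices covered by $M'$ has no independent set of size $|M'|$.
   Context: All graphs are finite and simple. A graph satisfies the matching condition if for every matching $M$ in it, the subgraph induced by the set of vertices covered by $M$ contains an independent set of size $|M|$. *)

theory Defs
  imports Main
begin

definition graph :: "'a set \<Rightarrow> 'a set set \<Rightarrow> bool" where
  "graph V E \<longleftrightarrow> finite V \<and> (\<forall>e\<in>E. \<exists>a b. e = {a, b} \<and> a \<noteq> b \<and> a \<in> V \<and> b \<in> V)"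

definition matching :: "'a set set \<Rightarrow> 'a set set \<Rightarrow> bool" where
  "matching E M \<longleftrightarrow> M \<subseteq> E \<and> (\<forall>e\<in>M. \<forall>f\<in>M. e \<noteq> f \<longrightarrow> e \<inter> f = {})"

text \<open>S is independent in G (equivalently in any induced subgraph containing S).\<close>
definition independent :: "'a set set \<Rightarrow> 'a set \<Rightarrow> bool" where
  "independent E S \<longleftrightarrow> (\<forall>a\<in>S. \<forall>b\<in>S. {a, b} \<notin> E)"

definition matching_condition :: "'a set \<Rightarrow> 'a set set \<Rightarrow> bool" where
  "matching_condition V E \<longleftrightarrow>
     (\<forall>M. matching E M \<longrightarrow> (\<exists>S. S \<subseteq> \<Union>M \<and> independent E S \<and> card S = card M))"

end

theory Submission
  imports Defs
begin

lemma indep_mono: "independent E S \<Longrightarrow> T \<subseteq> S \<Longrightarrow> independent E T"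
  unfolding independent_def by blast

lemma edge_sub:
  assumes "graph V E" "e \<in> E" shows "e \<subseteq> V"
proof -
  obtain a b where "e = {a, b}" "a \<in> V" "b \<in> V" using assms unfolding graph_def by meson
  thus ?thesis by simp
qed

lemma union_finite:
  assumes "graph V E" "M \<subseteq> E" shows "finite M" "finite (\<Union>M)" "\<Union>M \<subseteq> V"
proof -
  have fV: "finite V" using assms(1) unfolding graph_def by simp
  have "E \<subseteq> Pow V" using edge_sub[OF assms(1)] by auto
  hence fE: "finite E" using fV finite_subset by (metis finite_Pow_iff)
  show "finite M" using fE assms(2) finite_subset by auto
  show "\<Union>M \<subseteq> V" using edge_sub[OF assms(1)] assms(2) by auto
  then show "finite (\<Union>M)" using fV finite_subset by auto
qed

lemma key:
  assumes g: "graph V E" and uv: "{u, v} \<in> E"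
    and x: "x1 \<notin> V" "x2 \<notin> V" "x1 \<noteq> x2"
    and M: "M \<subseteq> E"
    and bad: "\<forall>S. S \<subseteq> \<Union>M \<longrightarrow> independent E S \<longrightarrow> card S \<noteq> card M"
    and S': "S' \<subseteq> \<Union>M \<union> {x1, x2}"
    and ind: "independent ((E - {{u, v}}) \<union> {{u, x1}, {x1, x2}, {x2, v}}) S'"
  shows "card S' \<noteq> card M + 1"
proof
  assume c: "card S' = card M + 1"
  let ?E' = "(E - {{u, v}}) \<union> {{u, x1}, {x1, x2}, {x2, v}}"
  have fU: "finite (\<Union>M)" and UV: "\<Union>M \<subseteq> V" using union_finite[OF g M] by auto
  have fS': "finite S'" using S' fU finite_subset by blast
  define S where "S = S' - {x1, x2}"
  have SU: "S \<subseteq> \<Union>M" using S' S_def by blast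
  have fS: "finite S" using fS' S_def by auto
  have not_both: "\<not> (x1 \<in> S' \<and> x2 \<in> S')" using ind unfolding independent_def by auto
  have "S' \<subseteq> insert x1 S \<or> S' \<subseteq> insert x2 S" using not_both S_def by blast
  moreover have "card (insert y S) \<le> card S + 1" for y using fS by (simp add: card_insert_if)
  ultimately have "card S' \<le> card S + 1"
    using card_mono fS finite_insert order_trans by metis
  hence cS: "card M \<le> card S" using c by simp
  show False
  proof (cases "u \<in> S \<and> v \<in> S")
    case True
    have "x1 \<notin> S'" using ind True S_def unfolding independent_def by auto
    moreover have "x2 \<notin> S'" using ind True S_def unfolding independent_def by auto
    ultimately have SS: "S = S'" using S_def by auto
    define T where "T = S - {u}"
    have cT: "card T = card M" using T_def SS c True fS by simp
    have "independent E T"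
      unfolding independent_def
    proof (intro ballI)
      fix a b assume ab: "a \<in> T" "b \<in> T"
      hence "a \<in> S'" "b \<in> S'" "a \<noteq> u" "b \<noteq> u" using T_def SS by auto
      hence "{a, b} \<notin> ?E'" using ind unfolding independent_def by blast
      moreover have "{a, b} \<noteq> {u, v}" using \<open>a \<noteq> u\<close> \<open>b \<noteq> u\<close> by (metis insert_iff doubleton_eq_iff)
      ultimately show "{a, b} \<notin> E" by blast
    qed
    moreover have "T \<subseteq> \<Union>M" using T_def SU by blast
    ultimately show False using bad cT by blast
  next
    case False
    have iS: "independent E S"
      unfolding independent_def
    proof (intro ballI)
      fix a b assume ab: "a \<in> S" "b \<in> S"
      hence "a \<in> S'" "b \<in> S'" using S_def by auto
      hence "{a, b} \<notin> ?E'" using ind unfolding independent_def by blast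
      moreover have "{a, b} \<noteq> {u, v}" using ab False by (metis doubleton_eq_iff)
      ultimately show "{a, b} \<notin> E" by blast
    qed
    obtain T where T: "T \<subseteq> S" "card T = card M" using obtain_subset_with_card_n[OF cS] by blast
    have "independent E T" using indep_mono[OF iS T(1)] .
    then show False using bad T SU by blast
  qed
qed

lemma case1:
  assumes g: "graph V E" and x: "x1 \<notin> V" "x2 \<notin> V"
    and ME: "M \<subseteq> E" and disj: "\<forall>e\<in>M. \<forall>f\<in>M. e \<noteq> f \<longrightarrow> e \<inter> f = {}"
    and nM: "{u, v} \<notin> M"
  shows "matching ((E - {{u, v}}) \<union> {{u, x1}, {x1, x2}, {x2, v}}) (insert {x1, x2} M)"
    "\<Union>(insert {x1, x2} M) = \<Union>M \<union> {x1, x2}"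
    "card (insert {x1, x2} M) = card M + 1"
proof -
  have EV: "\<And>e. e \<in> E \<Longrightarrow> e \<subseteq> V" using edge_sub[OF g] by blast
  have fM: "finite M" using union_finite[OF g ME] by simp
  have nx: "\<And>e. e \<in> M \<Longrightarrow> x1 \<notin> e \<and> x2 \<notin> e"
  proof -
    fix e assume "e \<in> M"
    hence "e \<subseteq> V" using EV ME by blast
    thus "x1 \<notin> e \<and> x2 \<notin> e" using x by blast
  qed
  show "matching ((E - {{u, v}}) \<union> {{u, x1}, {x1, x2}, {x2, v}}) (insert {x1, x2} M)"
    unfolding matching_def
  proof (intro conjI ballI impI)
    show "insert {x1, x2} M \<subseteq> (E - {{u, v}}) \<union> {{u, x1}, {x1, x2}, {x2, v}}"
      using ME nM by blast
  next
    fix e f assume ef: "e \<in> insert {x1, x2} M" "f \<in> insert {x1, x2} M" "e \<noteq> f"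
    have d: "g \<in> M \<Longrightarrow> {x1, x2} \<inter> g = {} \<and> g \<inter> {x1, x2} = {}" for g using nx[of g] by auto
    have m: "e \<in> M \<Longrightarrow> f \<in> M \<Longrightarrow> e \<inter> f = {}" using disj ef(3) by simp
    show "e \<inter> f = {}" using ef d[of e] d[of f] m by (auto simp only: insert_iff)
  qed
  show "\<Union>(insert {x1, x2} M) = \<Union>M \<union> {x1, x2}" by auto
  have "{x1, x2} \<notin> M" using nx by blast
  thus "card (insert {x1, x2} M) = card M + 1" using fM by simp
qed

lemma case2:
  assumes g: "graph V E" and x: "x1 \<notin> V" "x2 \<notin> V" "x1 \<noteq> x2"
    and uV: "u \<in> V" "v \<in> V" "u \<noteq> v"
    and ME: "M \<subseteq> E" and disj: "\<forall>e\<in>M. \<forall>f\<in>M. e \<noteq> f \<longrightarrow> e \<inter> f = {}"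
    and True: "{u, v} \<in> M"
  shows "matching ((E - {{u, v}}) \<union> {{u, x1}, {x1, x2}, {x2, v}}) (insert {u, x1} (insert {x2, v} (M - {{u, v}})))"
    "\<Union>(insert {u, x1} (insert {x2, v} (M - {{u, v}}))) = \<Union>M \<union> {x1, x2}"
    "card (insert {u, x1} (insert {x2, v} (M - {{u, v}}))) = card M + 1"
proof -
  let ?M0 = "M - {{u, v}}"
  let ?M' = "insert {u, x1} (insert {x2, v} ?M0)"
  let ?E' = "(E - {{u, v}}) \<union> {{u, x1}, {x1, x2}, {x2, v}}"
  have EV: "\<And>e. e \<in> E \<Longrightarrow> e \<subseteq> V" using edge_sub[OF g] by blast
  have fM: "finite M" using union_finite[OF g ME] by simp
  have oth: "\<And>e. e \<in> ?M0 \<Longrightarrow> u \<notin> e \<and> v \<notin> e \<and> x1 \<notin> e \<and> x2 \<notin> e"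
  proof -
    fix e assume e: "e \<in> ?M0"
    have eM: "e \<in> M" "e \<noteq> {u, v}" using e by auto
    have "e \<inter> {u, v} = {}" using disj eM True by simp
    moreover have "e \<subseteq> V" using EV ME eM(1) by blast
    ultimately show "u \<notin> e \<and> v \<notin> e \<and> x1 \<notin> e \<and> x2 \<notin> e" using x by auto
  qed
  have ne: "{u, x1} \<noteq> {x2, v}"
  proof
    assume eq: "{u, x1} = {x2, v}"
    have "x1 \<in> {u, x1}" by simp
    hence "x1 \<in> {x2, v}" using eq by simp
    thus False using x uV by auto
  qed
  show "matching ?E' ?M'" unfolding matching_def
  proof (intro conjI ballI impI)
    show "?M' \<subseteq> ?E'" using ME by blast
  next
    fix e f assume ef: "e \<in> ?M'" "f \<in> ?M'" "e \<noteq> f"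
    have m0: "e \<in> ?M0 \<Longrightarrow> f \<in> ?M0 \<Longrightarrow> e \<inter> f = {}"
      using disj ef(3) by simp
    have d1: "{u, x1} \<inter> {x2, v} = {} \<and> {x2, v} \<inter> {u, x1} = {}" using uV x by auto
    have d2: "g \<in> ?M0 \<Longrightarrow> {u, x1} \<inter> g = {} \<and> {x2, v} \<inter> g = {} \<and> g \<inter> {u, x1} = {} \<and> g \<inter> {x2, v} = {}" for g
      using oth[of g] by auto
    have E1: "e = {u, x1} \<or> e = {x2, v} \<or> e \<in> ?M0" using ef(1) by blast
    have F1: "f = {u, x1} \<or> f = {x2, v} \<or> f \<in> ?M0" using ef(2) by blast
    show "e \<inter> f = {}"
      using E1 F1
    proof (elim disjE)
    qed (use ef(3) m0 d1 d2[of e] d2[of f] in \<open>simp_all only:\<close>)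
  qed
  show "\<Union>?M' = \<Union>M \<union> {x1, x2}" using True by auto
  have a: "{u, x1} \<notin> M"
  proof
    assume "{u, x1} \<in> M"
    hence "{u, x1} \<subseteq> V" using ME EV by blast
    thus False using x by simp
  qed
  have b: "{x2, v} \<notin> M"
  proof
    assume "{x2, v} \<in> M"
    hence "{x2, v} \<subseteq> V" using ME EV by blast
    thus False using x by simp
  qed
  have c0: "card ?M0 = card M - 1" using True fM by simp
  have "M \<noteq> {}" using True by blast
  hence "card M \<ge> 1" using fM by (simp add: Suc_le_eq card_gt_0_iff)
  thus "card ?M' = card M + 1" using a b ne fM c0 by simp
qed

theorem mainTheorem3:
  fixes V :: "'a set" and E :: "'a set set" and u v x1 x2 :: 'a
  assumes "graph V E"
    and "\<not> matching_condition V E"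
    and "{u, v} \<in> E"
    and "x1 \<notin> V" and "x2 \<notin> V" and "x1 \<noteq> x2"
  shows "\<not> matching_condition (V \<union> {x1, x2})
            ((E - {{u, v}}) \<union> {{u, x1}, {x1, x2}, {x2, v}})"
proof
  let ?E' = "(E - {{u, v}}) \<union> {{u, x1}, {x1, x2}, {x2, v}}"
  assume mc: "matching_condition (V \<union> {x1, x2}) ?E'"
  obtain M where Mm: "matching E M" and bad: "\<forall>S. S \<subseteq> \<Union>M \<longrightarrow> independent E S \<longrightarrow> card S \<noteq> card M"
    using assms(2) unfolding matching_condition_def by blast
  have ME: "M \<subseteq> E" and disj: "\<forall>e\<in>M. \<forall>f\<in>M. e \<noteq> f \<longrightarrow> e \<inter> f = {}" using Mm unfolding matching_def by auto
  have "{u, v} \<subseteq> V" using edge_sub[OF assms(1,3)] .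
  hence uV1: "u \<in> V" "v \<in> V" by auto
  obtain a b where ab: "{u, v} = {a, b}" "a \<noteq> b"
    using assms(1,3) unfolding graph_def by meson
  have "u \<noteq> v"
  proof
    assume "u = v"
    hence "{a, b} = {u}" using ab(1) by simp
    hence "a = u" "b = u" by (metis insertI1 singletonD, metis insertI1 insertI2 singletonD)
    thus False using ab(2) by simp
  qed
  note uV = uV1 this
  obtain M' where M'm: "matching ?E' M'" and U': "\<Union>M' = \<Union>M \<union> {x1, x2}" and cM': "card M' = card M + 1"
  proof (cases "{u, v} \<in> M")
    case False
    show ?thesis using case1[OF assms(1,4,5) ME disj False] that by blast
  next
    case True
    show ?thesis using case2[OF assms(1,4,5,6) uV ME disj True] that by blast
  qed
  then obtain S' where "S' \<subseteq> \<Union>M'" "independent ?E' S'" "card S' = card M'"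
    using mc unfolding matching_condition_def by blast
  then show False using key[OF assms(1) assms(3) assms(4,5,6) ME bad] U' cM' by auto
qed

end
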